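(* Let $\delta$ be a positive integer and let $a_{\delta,i}$ be the coefficient of $x^i$ in $$p_\delta(x)=\left(\frac{1+\sqrt{1-4x}}{2}\right)^{\delta+1}+\left(\frac{1-\sqrt{1-4x}}{2}\right)^{\delta+1}$$ (so $a_{\delta,0}=1$). For $j\ge1$ let $\omega_j=\zeta(2j,\delta)$ (alternatively $\omega_j=\zeta(2j-1,\delta)$; the claim holds for either choice). Then for every integer $r$ with $1\le r\le\delta$, setting $\omega_0=\frac{r}{\delta+1}$, $$\sum_{0\le i\le r}\omega_{r-i}\,a_{\delta,i}=0.$$
   Context: For positive integers $m$ and $\delta$, a $\delta$-deviation set of size $m$ is a finite sequence $(\alpha_1,\dots,\alpha_\ell)$ of positive integers such that (i) $\sum_i\alpha_i=m$; (ii) $\big|\sum_i\alpha_{2i-1}-\sum_i\alpha_{2i}\big|\le 1$; (iii) $\big|\sum_{1\le i\le j}(-1)^{i-1}\alpha_i\big|\le\delta$ for every $j\ge1$; and $\zeta(m,\delta)$ is the number of $\delta$-deviation sets of size $m$. *)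

theory Defs
  imports Complex_Main "HOL-Computational_Algebra.Formal_Power_Series"
begin

(* alternating partial sum  sum_{1<=i<=j} (-1)^(i-1) alpha_i  of the list (0-indexed) *)
definition alt_psum :: "nat list \<Rightarrow> nat \<Rightarrow> int" where
  "alt_psum xs j = (\<Sum>i<j. (-1) ^ i * int (xs ! i))"

definition deviation_set :: "nat \<Rightarrow> nat \<Rightarrow> nat list \<Rightarrow> bool" where
  "deviation_set m \<delta> xs \<longleftrightarrow>
     (\<forall>x\<in>set xs. x > 0) \<and>
     sum_list xs = m \<and>
     \<bar>alt_psum xs (length xs)\<bar> \<le> 1 \<and>
     (\<forall>j. 1 \<le> j \<longrightarrow> j \<le> length xs \<longrightarrow> \<bar>alt_psum xs j\<bar> \<le> int \<delta>)"

definition zeta :: "nat \<Rightarrow> nat \<Rightarrow> nat" where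
  "zeta m \<delta> = card {xs. deviation_set m \<delta> xs}"

definition sqrt_fps :: "real fps" where
  "sqrt_fps = fps_radical (\<lambda>k x. root k x) 2 (1 - 4 * fps_X)"

definition p_fps :: "nat \<Rightarrow> real fps" where
  "p_fps \<delta> = (fps_const (1/2) * (1 + sqrt_fps)) ^ (\<delta> + 1)
             + (fps_const (1/2) * (1 - sqrt_fps)) ^ (\<delta> + 1)"

definition a_coeff :: "nat \<Rightarrow> nat \<Rightarrow> real" where
  "a_coeff \<delta> i = fps_nth (p_fps \<delta>) i"

end

theory Submission
  imports Defs
begin

unbundle fps_syntax

lemma binom_rec: "(Suc m) * ((2*m+2) choose (Suc m)) = (4*m+2) * ((2*m) choose m)"
proof -
  have 1: "Suc m * (Suc (2*m+1) choose Suc m) = Suc (2*m+1) * ((2*m+1) choose m)"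
    by (rule Suc_times_binomial)
  have 2: "Suc m * (Suc (2*m) choose Suc m) = Suc (2*m) * ((2*m) choose m)"
    by (rule Suc_times_binomial)
  have 3: "(Suc (2*m) choose Suc m) = ((2*m+1) choose m)"
    using binomial_symmetric[of "Suc m" "Suc (2*m)"] by simp
  have "Suc m * (Suc m * ((2*m+2) choose (Suc m))) = Suc m * ((4*m+2) * ((2*m) choose m))"
  proof -
    have "Suc m * (Suc m * ((2*m+2) choose (Suc m))) = Suc m * ((2*m+2) * ((2*m+1) choose m))"
      using 1 by (simp del: binomial_Suc_Suc)
    also have "\<dots> = (2*m+2) * (Suc m * ((2*m+1) choose m))" by (simp del: binomial_Suc_Suc)
    also have "\<dots> = (2*m+2) * ((2*m+1) * ((2*m) choose m))" using 2 3 by (simp del: binomial_Suc_Suc)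
    also have "\<dots> = Suc m * ((4*m+2) * ((2*m) choose m))" by (simp add: algebra_simps del: binomial_Suc_Suc)
    finally show ?thesis .
  qed
  then show ?thesis by (simp only: mult_left_cancel)
qed

lemma fps_numeral_mult_nth: "(numeral k * f :: real fps) $ i = numeral k * f $ i"
  by (simp add: numeral_fps_const)

definition cb :: "real fps" where "cb = Abs_fps (\<lambda>m. real ((2*m) choose m))"

lemma s_sq: "sqrt_fps ^ 2 = 1 - 4 * fps_X"
proof -
  have "(fps_radical (\<lambda>k x. root k x) (Suc 1) (1 - 4 * fps_X)) ^ (Suc 1) = (1 - 4 * fps_X :: real fps)"
    by (subst power_radical[symmetric]) simp_all
  then show ?thesis unfolding sqrt_fps_def by (simp add: numeral_2_eq_2)
qed

lemma s0: "sqrt_fps $ 0 = 1"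
  unfolding sqrt_fps_def by simp

lemma cs: "inverse sqrt_fps * sqrt_fps = 1"
  using s0 by (intro inverse_mult_eq_1) simp

lemma cs': "sqrt_fps * inverse sqrt_fps = 1"
  using cs by (simp add: mult.commute)

lemma sderiv: "fps_deriv sqrt_fps = - 2 * inverse sqrt_fps"
proof -
  let ?s = sqrt_fps and ?c = "inverse sqrt_fps"
  have "fps_deriv (?s ^ 2) = fps_deriv (1 - 4 * fps_X)" by (simp add: s_sq)
  hence "2 * (?s * fps_deriv ?s) = - 4"
    by (simp add: fps_deriv_power' numeral_2_eq_2)
  hence "2 * fps_deriv ?s * ?s = - 4" by (simp add: ac_simps)
  hence "2 * fps_deriv ?s * ?s * ?c = - 4 * ?c" by simp
  hence "2 * fps_deriv ?s = - 4 * ?c" using cs' by (simp add: mult.assoc)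
  hence h: "2 * fps_deriv ?s = - (4 * ?c)" by simp
  show ?thesis
  proof (rule fps_ext)
    fix n
    have "(2 * fps_deriv ?s) $ n = (- (4 * ?c)) $ n" using h by simp
    hence "2 * fps_deriv ?s $ n = - (4 * ?c $ n)" by (simp only: fps_numeral_mult_nth fps_neg_nth)
    hence "fps_deriv ?s $ n = - (2 * ?c $ n)" by (simp add: mult.commute)
    thus "fps_deriv ?s $ n = (- 2 * ?c) $ n" by (simp only: fps_numeral_mult_nth fps_neg_nth mult_minus_left)
  qed
qed

lemma cb_ode: "fps_deriv cb * (1 - 4 * fps_X) = 2 * cb"
proof (rule fps_ext)
  fix m
  have "fps_deriv cb * (1 - 4 * fps_X) = fps_deriv cb - 4 * (fps_X * fps_deriv cb)"
    by (simp add: algebra_simps)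
  hence "(fps_deriv cb * (1 - 4 * fps_X)) $ m = fps_deriv cb $ m - 4 * (fps_X * fps_deriv cb) $ m"
    by (simp only: fps_sub_nth fps_numeral_mult_nth)
  also have "\<dots> = 2 * cb $ m"
  proof (cases m)
    case 0 then show ?thesis by (simp add: cb_def)
  next
    case (Suc k)
    have "real (Suc m * ((2*m+2) choose (Suc m))) = real ((4*m+2) * ((2*m) choose m))"
      using binom_rec by presburger
    hence "(1 + real m) * real ((2*m+2) choose (Suc m)) = (4*real m+2) * real ((2*m) choose m)"
      by (simp add: algebra_simps del: binomial_Suc_Suc)
    moreover have "(fps_X * fps_deriv cb) $ m = real m * cb $ m" using Suc by simp
    moreover have "fps_deriv cb $ m = (1 + real m) * real ((2*m+2) choose (Suc m))"
      by (simp add: cb_def del: binomial_Suc_Suc)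
    ultimately show ?thesis by (simp add: cb_def algebra_simps del: binomial_Suc_Suc)
  qed
  finally show "(fps_deriv cb * (1 - 4 * fps_X)) $ m = (2 * cb) $ m" by (simp add: fps_numeral_mult_nth)
qed

lemma c_eq: "inverse sqrt_fps = cb"
proof -
  let ?s = sqrt_fps and ?c = "inverse sqrt_fps"
  define E where "E = cb * ?s"
  have "?s * fps_deriv E = fps_deriv cb * ?s^2 + cb * (?s * fps_deriv ?s)"
    by (simp add: E_def algebra_simps power2_eq_square)
  also have "?s * fps_deriv ?s = -2" using cs sderiv by (simp add: algebra_simps)
  also have "fps_deriv cb * ?s^2 = 2 * cb" using cb_ode s_sq by simp
  finally have "?s * fps_deriv E = 0" by simp
  hence "?c * (?s * fps_deriv E) = 0" by simp
  hence "fps_deriv E = 0" using cs by (simp add: mult.assoc[symmetric])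
  hence "E = fps_const (E $ 0)" by simp
  moreover have "E $ 0 = 1" by (simp add: E_def cb_def s0)
  ultimately have "cb * ?s = 1" by (simp add: E_def)
  hence "?c = cb * ?s * ?c" by simp
  also have "\<dots> = cb" using cs by (simp add: algebra_simps)
  finally show ?thesis .
qed


lemma ring_id:
  fixes c u v :: "'a::comm_ring_1"
  assumes "2*c*v = c - 1" "2*c*u = c + 1"
  shows "c*(u*u^k + v*v^k) - (u*u^k + v*v^k) + (u*v)*(2*c*v^k - 2*c*u^k) = 2*c*(v*v^k)"
proof -
  have "c*(u*u^k + v*v^k) - (u*u^k + v*v^k) + (u*v)*(2*c*v^k - 2*c*u^k)
      = u*u^k*(c - 1 - 2*c*v) + v*v^k*(c - 1 + 2*c*u)"
    by (simp add: algebra_simps)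
  also have "\<dots> = 2*c*(v*v^k)" using assms by (simp add: algebra_simps)
  finally show ?thesis .
qed

lemma binom_half: "j \<ge> 1 \<Longrightarrow> (2*j) choose j = 2 * ((2*j - 1) choose j)"
proof -
  assume "j \<ge> 1"
  then obtain k where k: "j = Suc k" by (cases j) auto
  have "(2*j) choose j = (Suc (2*k+1) choose Suc k)" using k by simp
  also have "\<dots> = ((2*k+1) choose k) + ((2*k+1) choose Suc k)" by (rule binomial_Suc_Suc)
  also have "((2*k+1) choose Suc k) = ((2*k+1) choose k)"
    using binomial_symmetric[of "Suc k" "2*k+1"] by simp
  finally show ?thesis using k by simp
qed

lemma key:
  fixes \<delta> r :: nat
  assumes r1: "1 \<le> r" and rd: "r \<le> \<delta>"
  shows "(\<Sum>i=0..r. (if r - i = 0 then real r / real (\<delta> + 1)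
            else real ((2*(r-i) - 1) choose (r-i))) * a_coeff \<delta> i) = 0"
proof -
  let ?s = sqrt_fps
  define c where "c = inverse sqrt_fps"
  define h :: "real fps" where "h = fps_const (1/2)"
  define u where "u = h * (1 + ?s)"
  define v where "v = h * (1 - ?s)"
  define n where "n = \<delta> + 1"
  define K :: "real fps" where "K = fps_const (1 / real n)"
  define p where "p = p_fps \<delta>"
  have h2: "2 * h = 1" unfolding h_def by (simp add: numeral_fps_const fps_const_mult[symmetric])
  have cs1: "c * ?s = 1" using cs by (simp add: c_def)
  have p_def': "p = u^n + v^n" by (simp add: p_def p_fps_def u_def v_def h_def n_def)
  have uv: "u * v = fps_X"
  proof -
    have "u * v = (2*h) * (2*h) * (1 - ?s^2) * fps_const (1/4)"
      by (simp add: u_def v_def algebra_simps power2_eq_square numeral_fps_const fps_const_mult[symmetric] h_def)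
    also have "\<dots> = fps_X" using h2 s_sq by (simp add: numeral_fps_const fps_const_mult[symmetric])
    finally show ?thesis .
  qed
  have du: "fps_deriv u = - c" using sderiv h2 unfolding u_def c_def
    by (simp add: algebra_simps h_def)
  have dv: "fps_deriv v = c" using sderiv h2 unfolding v_def c_def
    by (simp add: algebra_simps h_def)
  have F1: "2*c*v = c - 1" using h2 cs1 unfolding v_def
    by (metis (no_types, lifting) mult.assoc mult.commute mult.left_neutral right_diff_distrib' mult.right_neutral)
  have F2: "2*c*u = c + 1" using h2 cs1 unfolding u_def
    by (metis (no_types, lifting) mult.assoc mult.commute mult.left_neutral distrib_left mult.right_neutral)
  have Kn: "K * of_nat n = 1"
  proof -
    have "K * of_nat n = fps_const (1 / real n * real n)"
      unfolding K_def by (simp only: fps_of_nat[symmetric] fps_const_mult)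
    also have "\<dots> = 1" by (simp add: n_def)
    finally show ?thesis .
  qed
  have dp: "fps_deriv p = of_nat n * (c * v^\<delta> - c * u^\<delta>)"
    by (simp only: p_def' fps_deriv_add fps_deriv_power' du dv) (simp add: n_def algebra_simps)
  have main: "c*p - p + 2 * K * (fps_X * fps_deriv p) = 2*c*v^n"
  proof -
    have "2 * K * (fps_X * fps_deriv p) = (u*v)*(2*c*v^\<delta> - 2*c*u^\<delta>)"
    proof -
      have "2 * K * (fps_X * fps_deriv p) = 2 * (K * of_nat n) * (fps_X * (c*v^\<delta> - c*u^\<delta>))"
        unfolding dp by (simp add: algebra_simps)
      also have "\<dots> = (u*v)*(2*c*v^\<delta> - 2*c*u^\<delta>)" unfolding Kn uv by (simp add: algebra_simps)
      finally show ?thesis .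
    qed
    moreover have "p = u*u^\<delta> + v*v^\<delta>" by (simp add: p_def' n_def)
    ultimately have "c*p - p + 2 * K * (fps_X * fps_deriv p) =
       c*(u*u^\<delta> + v*v^\<delta>) - (u*u^\<delta> + v*v^\<delta>) + (u*v)*(2*c*v^\<delta> - 2*c*u^\<delta>)" by simp
    also have "\<dots> = 2*c*(v*v^\<delta>)" by (rule ring_id[OF F1 F2])
    finally show ?thesis by (simp add: n_def)
  qed
  define w where "w = Abs_fps (\<lambda>k. v $ Suc k)"
  have v0: "v $ 0 = 0" by (simp add: v_def h_def s0)
  have vw: "v = fps_X * w" by (rule fps_ext) (auto simp: w_def v0)
  have "(2*c*v^n) $ r = 0"
  proof -
    have vn: "v^n = fps_X^n * w^n" unfolding vw by (rule power_mult_distrib)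
    have "2*c*v^n = fps_X^n * (2*c*w^n)" unfolding vn by (simp only: ac_simps)
    moreover have "r < n" using rd by (simp add: n_def)
    ultimately show ?thesis by (simp only: fps_X_power_mult_nth if_True)
  qed
  hence e1: "(c*p - p + 2*K*(fps_X*fps_deriv p)) $ r = 0" using main by simp
  have e2: "(2*K*(fps_X*fps_deriv p)) $ r = 2*(1/real n*(real r * p $ r))"
  proof -
    have "(2*K*(fps_X*fps_deriv p)) $ r = 2 * ((K*(fps_X*fps_deriv p)) $ r)"
      by (simp only: mult.assoc fps_numeral_mult_nth)
    also have "(K*(fps_X*fps_deriv p)) $ r = (1/real n) * (fps_X*fps_deriv p) $ r"
      unfolding K_def by (rule fps_mult_left_const_nth)
    also have "(fps_X*fps_deriv p) $ r = real r * p $ r" using r1 by (cases r) (auto simp: fps_deriv_nth)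
    finally show ?thesis .
  qed
  have eq: "(c*p) $ r - p $ r + 2 * (1 / real n * (real r * p $ r)) = 0"
    using e1 e2 by (simp only: fps_add_nth fps_sub_nth)
  have cp: "(c*p) $ r = (\<Sum>i=0..r. p $ i * c $ (r - i))"
    by (simp add: mult.commute[of c] fps_mult_nth)
  have T: "2 * ((if r - i = 0 then real r / real (\<delta> + 1)
            else real ((2*(r-i) - 1) choose (r-i))) * a_coeff \<delta> i)
        = p $ i * c $ (r - i) - (if i = r then p $ r else 0) + (if i = r then 2 * (1 / real n) * (real r * p $ r) else 0)"
    if "i \<in> {0..r}" for i
  proof (cases "i = r")
    case True then show ?thesis by (simp add: c_def c_eq cb_def a_coeff_def p_def n_def)
  next
    case False
    hence "r - i \<ge> 1" using that by auto
    hence "real ((2*(r-i)) choose (r-i)) = 2 * real ((2*(r-i) - 1) choose (r-i))"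
      using binom_half by simp
    then show ?thesis using False that by (simp add: c_def c_eq cb_def a_coeff_def p_def n_def)
  qed
  have "2 * (\<Sum>i=0..r. (if r - i = 0 then real r / real (\<delta> + 1)
            else real ((2*(r-i) - 1) choose (r-i))) * a_coeff \<delta> i)
      = (\<Sum>i=0..r. p $ i * c $ (r - i) - (if i = r then p $ r else 0) + (if i = r then 2 * (1 / real n) * (real r * p $ r) else 0))"
    unfolding sum_distrib_left by (rule sum.cong[OF refl], rule T)
  also have "\<dots> = (c*p) $ r - p $ r + 2 * (1 / real n) * (real r * p $ r)"
    by (simp add: sum.distrib sum_subtractf cp)
  finally show ?thesis using eq by simp
qed


fun ev :: "nat list \<Rightarrow> nat" and od :: "nat list \<Rightarrow> nat" where
  "ev [] = 0"
| "ev (x # xs) = x + od xs"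
| "od [] = 0"
| "od (x # xs) = ev xs"

lemma sum_list_ev_od: "sum_list xs = ev xs + od xs"
  by (induction xs) auto

lemma alt_psum_Cons: "alt_psum (x # xs) (Suc j) = int x - alt_psum xs j"
  unfolding alt_psum_def sum.lessThan_Suc_shift by (simp add: sum_negf del: sum.lessThan_Suc)

lemma alt_psum_bounds:
  "j \<le> length xs \<Longrightarrow> - int (od xs) \<le> alt_psum xs j \<and> alt_psum xs j \<le> int (ev xs)"
proof (induction xs arbitrary: j)
  case Nil then show ?case by (simp add: alt_psum_def)
next
  case (Cons x xs)
  show ?case
  proof (cases j)
    case 0 then show ?thesis by (simp add: alt_psum_def)
  next
    case (Suc j')
    with Cons.prems have "j' \<le> length xs" by simp
    from Cons.IH[OF this] show ?thesis using Suc by (simp add: alt_psum_Cons)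
  qed
qed

lemma alt_psum_full: "alt_psum xs (length xs) = int (ev xs) - int (od xs)"
  by (induction xs) (auto simp: alt_psum_Cons, simp add: alt_psum_def)

definition S :: "nat \<Rightarrow> nat \<Rightarrow> nat list set" where
  "S a b = {xs. (\<forall>x\<in>set xs. x > 0) \<and> ev xs = a \<and> od xs = b}"

lemma length_le_sum: "\<forall>x\<in>set xs. x > 0 \<Longrightarrow> length xs \<le> sum_list xs"
  by (induction xs) auto

lemma finite_S: "finite (S a b)"
proof -
  have "S a b \<subseteq> {xs. set xs \<subseteq> {0..a+b} \<and> length xs \<le> a+b}"
  proof
    fix xs assume "xs \<in> S a b"
    hence p: "\<forall>x\<in>set xs. x > 0" and s: "sum_list xs = a + b" by (auto simp: S_def sum_list_ev_od)
    have "set xs \<subseteq> {0..a+b}" using member_le_sum_list s by fastforce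
    moreover have "length xs \<le> a + b" using length_le_sum[OF p] s by simp
    ultimately show "xs \<in> {xs. set xs \<subseteq> {0..a+b} \<and> length xs \<le> a+b}" by simp
  qed
  moreover have "finite {xs. set xs \<subseteq> {0..a+b} \<and> length xs \<le> a+b}"
    by (rule finite_lists_length_le) simp
  ultimately show ?thesis by (rule finite_subset)
qed

lemma S_00: "S 0 0 = {[]}"
  unfolding S_def by (auto elim: ev.elims)

lemma S_0b: "b > 0 \<Longrightarrow> S 0 b = {}"
  unfolding S_def by (auto elim: ev.elims)

lemma S_rec: "a > 0 \<Longrightarrow> S a b = (\<Union>k\<in>{1..a}. (#) k ` S b (a - k))"
proof
  assume a: "a > 0"
  show "S a b \<subseteq> (\<Union>k\<in>{1..a}. (#) k ` S b (a - k))"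
  proof
    fix xs assume xs: "xs \<in> S a b"
    then obtain y ys where yy: "xs = y # ys" using a by (cases xs) (auto simp: S_def)
    with xs have "y \<in> {1..a}" "ys \<in> S b (a - y)" by (auto simp: S_def)
    thus "xs \<in> (\<Union>k\<in>{1..a}. (#) k ` S b (a - k))" using yy by blast
  qed
next
  show "(\<Union>k\<in>{1..a}. (#) k ` S b (a - k)) \<subseteq> S a b"
    by (auto simp: S_def)
qed

lemma card_S_rec: "a > 0 \<Longrightarrow> card (S a b) = (\<Sum>k=1..a. card (S b (a - k)))"
proof -
  assume a: "a > 0"
  have "card (S a b) = card (\<Union>k\<in>{1..a}. (#) k ` S b (a - k))" using S_rec[OF a] by simp
  also have "\<dots> = (\<Sum>k=1..a. card ((#) k ` S b (a - k)))"
    by (rule card_UN_disjoint) (auto simp: finite_S)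
  also have "\<dots> = (\<Sum>k=1..a. card (S b (a - k)))"
    by (rule sum.cong[OF refl], rule card_image) (simp add: inj_on_def)
  finally show ?thesis .
qed

definition g :: "nat \<Rightarrow> nat \<Rightarrow> nat" where
  "g a b = (if a = 0 then (if b = 0 then 1 else 0) else (a + b - 1) choose b)"

lemma card_S: "card (S a b) = g a b"
proof (induction "a + b" arbitrary: a b rule: less_induct)
  case less
  show ?case
  proof (cases "a = 0")
    case True then show ?thesis
      by (cases "b = 0") (auto simp: g_def S_00 S_0b)
  next
    case False
    hence a: "a > 0" by simp
    have "card (S a b) = (\<Sum>k=1..a. card (S b (a - k)))" by (rule card_S_rec[OF a])
    also have "\<dots> = (\<Sum>k=1..a. g b (a - k))"
    proof (rule sum.cong[OF refl])
      fix k assume "k \<in> {1..a}"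
      hence "b + (a - k) < a + b" by auto
      thus "card (S b (a - k)) = g b (a - k)" by (rule less(1))
    qed
    also have "\<dots> = (\<Sum>c<a. g b c)"
    proof -
      have "(\<Sum>k=1..a. g b (a - k)) = (\<Sum>c\<in>(\<lambda>k. a - k) ` {1..a}. g b c)"
        by (rule sum.reindex[symmetric, unfolded comp_def]) (auto simp: inj_on_def)
      also have "(\<lambda>k. a - k) ` {1..a} = {..<a}"
      proof
        show "(\<lambda>k. a - k) ` {1..a} \<subseteq> {..<a}" using a by auto
        show "{..<a} \<subseteq> (\<lambda>k. a - k) ` {1..a}"
        proof
          fix c assume "c \<in> {..<a}"
          hence "c = a - (a - c)" "a - c \<in> {1..a}" by auto
          thus "c \<in> (\<lambda>k. a - k) ` {1..a}" by blast
        qed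
      qed
      finally show ?thesis .
    qed
    also have "\<dots> = g a b"
    proof (cases "b = 0")
      case True
      have "(\<Sum>c<a. g 0 c) = (\<Sum>c<a. if c = 0 then 1 else 0)"
        by (simp add: g_def)
      also have "\<dots> = 1" using a by simp
      finally show ?thesis using True a by (simp add: g_def)
    next
      case False
      have "(\<Sum>c<a. g b c) = (\<Sum>c\<le>a-1. ((b-1) + c) choose c)"
      proof -
        have "{..<a} = {..a-1}" using a by auto
        thus ?thesis using False by (simp add: g_def)
      qed
      also have "\<dots> = Suc ((b-1) + (a-1)) choose (a-1)" by (rule sum_choose_lower)
      also have "\<dots> = (a + b - 1) choose (a - 1)"
      proof -
        have "Suc ((b-1) + (a-1)) = a + b - 1" using a False by simp
        thus ?thesis by (simp only:)
      qed
      also have "\<dots> = (a + b - 1) choose b"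
        using binomial_symmetric[of "a-1" "a+b-1"] a False by simp
      finally show ?thesis using a by (simp add: g_def)
    qed
    finally show ?thesis .
  qed
qed

lemma dev_iff:
  assumes "m \<le> 2 * \<delta>"
  shows "deviation_set m \<delta> xs \<longleftrightarrow>
           (\<forall>x\<in>set xs. x > 0) \<and> ev xs + od xs = m \<and> \<bar>int (ev xs) - int (od xs)\<bar> \<le> 1"
proof
  assume "deviation_set m \<delta> xs"
  thus "(\<forall>x\<in>set xs. x > 0) \<and> ev xs + od xs = m \<and> \<bar>int (ev xs) - int (od xs)\<bar> \<le> 1"
    by (simp add: deviation_set_def sum_list_ev_od alt_psum_full)
next
  assume H: "(\<forall>x\<in>set xs. x > 0) \<and> ev xs + od xs = m \<and> \<bar>int (ev xs) - int (od xs)\<bar> \<le> 1"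
  have "ev xs \<le> \<delta>" "od xs \<le> \<delta>" using H assms by linarith+
  moreover have "\<And>j. j \<le> length xs \<Longrightarrow> - int (od xs) \<le> alt_psum xs j \<and> alt_psum xs j \<le> int (ev xs)"
    by (rule alt_psum_bounds)
  ultimately have "\<forall>j. 1 \<le> j \<longrightarrow> j \<le> length xs \<longrightarrow> \<bar>alt_psum xs j\<bar> \<le> int \<delta>"
    by (smt (verit, best) of_nat_le_iff)
  thus "deviation_set m \<delta> xs" using H
    by (simp add: deviation_set_def sum_list_ev_od alt_psum_full)
qed

lemma zeta_even:
  assumes "1 \<le> j" "j \<le> \<delta>"
  shows "zeta (2*j) \<delta> = (2*j - 1) choose j"
proof -
  have "{xs. deviation_set (2*j) \<delta> xs} = S j j"
    using assms by (auto simp: dev_iff S_def)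
  hence "zeta (2*j) \<delta> = g j j" by (simp add: zeta_def card_S)
  thus ?thesis using assms by (simp add: g_def mult_2)
qed

lemma zeta_odd:
  assumes "1 \<le> j" "j \<le> \<delta>"
  shows "zeta (2*j - 1) \<delta> = (2*j - 1) choose j"
proof -
  have "{xs. deviation_set (2*j - 1) \<delta> xs} = S j (j-1) \<union> S (j-1) j"
    using assms by (auto simp: dev_iff S_def)
  moreover have "S j (j-1) \<inter> S (j-1) j = {}" using assms by (auto simp: S_def)
  ultimately have "zeta (2*j - 1) \<delta> = g j (j-1) + g (j-1) j"
    by (simp add: zeta_def card_Un_disjoint finite_S card_S)
  also have "\<dots> = ((2*j - 2) choose (j - 1)) + ((2*j - 2) choose j)"
    using assms by (cases "j = 1") (auto simp: g_def mult_2 numeral_2_eq_2)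
  also have "\<dots> = (2*j - 1) choose j"
  proof -
    obtain k where k: "j = Suc k" using assms by (cases j) auto
    show ?thesis using k by simp
  qed
  finally show ?thesis .
qed


theorem corollary2:
  fixes \<delta> r :: nat
  assumes "\<delta> \<ge> 1" and "1 \<le> r" and "r \<le> \<delta>"
  shows "(\<Sum>i=0..r. (if r - i = 0 then real r / real (\<delta> + 1)
                        else real (zeta (2 * (r - i)) \<delta>)) * a_coeff \<delta> i) = 0
       \<and> (\<Sum>i=0..r. (if r - i = 0 then real r / real (\<delta> + 1)
                        else real (zeta (2 * (r - i) - 1) \<delta>)) * a_coeff \<delta> i) = 0"
proof
  have K: "(\<Sum>i=0..r. (if r - i = 0 then real r / real (\<delta> + 1)
            else real ((2*(r-i) - 1) choose (r-i))) * a_coeff \<delta> i) = 0"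
    using key assms by blast
  have "(\<Sum>i=0..r. (if r - i = 0 then real r / real (\<delta> + 1)
                        else real (zeta (2 * (r - i)) \<delta>)) * a_coeff \<delta> i)
      = (\<Sum>i=0..r. (if r - i = 0 then real r / real (\<delta> + 1)
            else real ((2*(r-i) - 1) choose (r-i))) * a_coeff \<delta> i)"
  proof (rule sum.cong[OF refl])
    fix i assume "i \<in> {0..r}"
    thus "(if r - i = 0 then real r / real (\<delta> + 1)
                        else real (zeta (2 * (r - i)) \<delta>)) * a_coeff \<delta> i =
          (if r - i = 0 then real r / real (\<delta> + 1)
            else real ((2*(r-i) - 1) choose (r-i))) * a_coeff \<delta> i"
      using zeta_even[of "r - i" \<delta>] assms by auto
  qed
  thus "(\<Sum>i=0..r. (if r - i = 0 then real r / real (\<delta> + 1)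
                        else real (zeta (2 * (r - i)) \<delta>)) * a_coeff \<delta> i) = 0" using K by simp
  have "(\<Sum>i=0..r. (if r - i = 0 then real r / real (\<delta> + 1)
                        else real (zeta (2 * (r - i) - 1) \<delta>)) * a_coeff \<delta> i)
      = (\<Sum>i=0..r. (if r - i = 0 then real r / real (\<delta> + 1)
            else real ((2*(r-i) - 1) choose (r-i))) * a_coeff \<delta> i)"
  proof (rule sum.cong[OF refl])
    fix i assume "i \<in> {0..r}"
    thus "(if r - i = 0 then real r / real (\<delta> + 1)
                        else real (zeta (2 * (r - i) - 1) \<delta>)) * a_coeff \<delta> i =
          (if r - i = 0 then real r / real (\<delta> + 1)
            else real ((2*(r-i) - 1) choose (r-i))) * a_coeff \<delta> i"
      using zeta_odd[of "r - i" \<delta>] assms by auto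
  qed
  thus "(\<Sum>i=0..r. (if r - i = 0 then real r / real (\<delta> + 1)
                        else real (zeta (2 * (r - i) - 1) \<delta>)) * a_coeff \<delta> i) = 0" using K by simp
qed

end
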